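(* Let $K, M, R, T \in \mathbb{N}$, put $D = KM$, and let ${\bf g} \in \mathbb{C}^D$ be a prototype filter with frequency-domain version ${\bf g}_f = \sqrt{D}\,{\bf W}_D {\bf g}$. Let ${\bf A} \in \mathbb{C}^{D\times D}$ be the GFDM matrix $$ {\bf A}=[{\bf g}_{0,0}\ \cdots\ {\bf g}_{K-1,0}\ \ {\bf g}_{0,1}\ \cdots\ {\bf g}_{K-1,1}\ \cdots\ {\bf g}_{K-1,M-1}], $$ where $[{\bf g}_{k,m}]_n=[{\bf g}]_{\langle n-mK\rangle_D}\,e^{j2\pi kn/K}$ for $n=0,\dots,D-1$, $k=0,\dots,K-1$, $m=0,\dots,M-1$. Here $\langle\cdot\rangle_D$ denotes reduction modulo $D$. Column $kM'$ ordering is as displayed: $k$ varies fastest. For $r=1,\dots,R$ and $t=1,\dots,T$, let ${\bf H}_{r,t}\in\mathbb{C}^{D\times D}$ be arbitrary circulant matrices. Define the $RD\times TD$ block matrix $$ \tilde{\bf H}=\begin{bmatrix}{\bf H}_{1,1}{\bf A} & \cdots & {\bf H}_{1,T}{\bf A}\\ \vdots & \ddots & \vdots\\ {\bf H}_{R,1}{\bf A} & \cdots & {\bf H}_{R,T}{\bf A}\end{bmatrix}. $$ Assume ${\bf g}_f$ has at most $M$ consecutive (cyclically) nonzero entries. Precisely, assume there exist ${\bf g}_1\in\mathbb{C}^M$ and an integer $l$ with $0\le l<D$ such that $$ {\bf g}_f = {\bf C}_D^{\,l}\begin{bmatrix}{\bf g}_1^T & {\bf 0}^T_{(K-1)M}\end{bmatrix}^T.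 $$ Then there exist matrices ${\bf F}_0,\dots,{\bf F}_{K-1}\in\mathbb{C}^{MR\times MT}$ such that $$ \tilde{\bf H}={\bf U}^H\,\mathrm{blkdiag}(\{{\bf F}_k\}_{k=0}^{K-1})\,{\bf P}, $$ where $$ {\bf U}=({\bf S}_{K,R}\otimes{\bf I}_M)({\bf I}_R\otimes {\bf C}_D^{-l}{\bf W}_D) $$ and $$ {\bf P}=({\bf S}_{K,T}\otimes{\bf I}_M)({\bf I}_T\otimes{\bf S}_{K,M}). $$
   Context: Matrix and vector entries are indexed from zero. ${\bf W}_p$ is the normalized $p$-point DFT matrix, with $[{\bf W}_p]_{m,n}=e^{-j2\pi mn/p}/\sqrt{p}$. ${\bf I}_p$ is the $p\times p$ identity matrix, and ${\bf 0}_q$ is the $q\times 1$ zero vector. $\otimes$ denotes the Kronecker product. $\mathrm{blkdiag}(\{{\bf F}_k\}_{k=0}^{K-1})$ is the block-diagonal matrix whose $k$th diagonal block is ${\bf F}_k$. For $A\in\mathbb{N}$, ${\bf C}_A$ is the $A\times A$ cyclic-shift permutation matrix $$ {\bf C}_A=\begin{bmatrix}{\bf 0}_{A-1}^T & 1\\ {\bf I}_{A-1} & {\bf 0}_{A-1}\end{bmatrix}. $$ The paper writes this matrix as ${\bf \Pi}_A$. For $A,B\in\mathbb{N}$, ${\bf S}_{A,B}$ is the $AB\times AB$ permutation matrix defined by $[{\bf S}_{A,B}]_{mB+p,\,qA+n}=\delta_{mn}\delta_{pq}$ for all $m,n\in\{0,\dots,A-1\}$ and $p,q\in\{0,\dots,B-1\}$,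 where $\delta$ is the Kronecker delta. The paper writes this matrix as ${\bf \Pi}_{AB}$; in the theorem it appears as ${\bf \Pi}_{KR}$, ${\bf \Pi}_{KT}$, ${\bf \Pi}_{KM}$, with $(A,B)=(K,R),(K,T),(K,M)$ respectively. Interpretation (not needed for the statement): ${\bf H}_{r,t}$ models the cyclic-prefix-equivalent channel from transmit antenna $t$ to receive antenna $r$ in a MIMO-GFDM system. *)

theory Defs
  imports Complex_Main "Jordan_Normal_Form.Matrix"
begin

text \<open>All matrices/vectors are indexed from zero.\<close>

definition herm :: "complex mat \<Rightarrow> complex mat" where
  "herm A = mat (dim_col A) (dim_row A) (\<lambda>(i,j). cnj (A $$ (j,i)))"

definition dft_mat :: "nat \<Rightarrow> complex mat" where
  "dft_mat p = mat p p (\<lambda>(m,n). exp (- 2 * pi * \<i> * of_nat (m*n) / of_nat p) / of_real (sqrt (real p)))"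

definition cyc_shift :: "nat \<Rightarrow> complex mat" where
  "cyc_shift A = mat A A (\<lambda>(i,j). if (i = 0 \<and> j = A - 1) \<or> (i \<ge> 1 \<and> j = i - 1) then 1 else 0)"

definition perm_S :: "nat \<Rightarrow> nat \<Rightarrow> complex mat" where
  "perm_S A B = mat (A*B) (A*B)
     (\<lambda>(i,j). if i div B = j mod A \<and> i mod B = j div A then 1 else 0)"

definition kron :: "complex mat \<Rightarrow> complex mat \<Rightarrow> complex mat" where
  "kron X Y = mat (dim_row X * dim_row Y) (dim_col X * dim_col Y)
     (\<lambda>(i,j). X $$ (i div dim_row Y, j div dim_col Y) * Y $$ (i mod dim_row Y, j mod dim_col Y))"

definition blkdiag :: "nat \<Rightarrow> nat \<Rightarrow> nat \<Rightarrow> (nat \<Rightarrow> complex mat) \<Rightarrow> complex mat" where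
  "blkdiag K a b F = mat (K*a) (K*b)
     (\<lambda>(i,j). if i div a = j div b then F (i div a) $$ (i mod a, j mod b) else 0)"

definition is_circulant :: "nat \<Rightarrow> complex mat \<Rightarrow> bool" where
  "is_circulant D H \<longleftrightarrow> H \<in> carrier_mat D D \<and>
     (\<exists>h :: nat \<Rightarrow> complex. \<forall>i<D. \<forall>j<D. H $$ (i,j) = h ((i + D - j) mod D))"

text \<open>GFDM matrix: column mK+k is g_{k,m}, [g_{k,m}]_n = g_{<n-mK>_D} e^{j 2 pi k n / K}.\<close>
definition gfdm_mat :: "nat \<Rightarrow> nat \<Rightarrow> complex vec \<Rightarrow> complex mat" where
  "gfdm_mat K M g = mat (K*M) (K*M)
     (\<lambda>(n,c). g $ (nat ((int n - int (c div K) * int K) mod int (K*M)))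
              * exp (2 * pi * \<i> * of_nat ((c mod K) * n) / of_nat K))"

definition block_channel :: "nat \<Rightarrow> nat \<Rightarrow> nat \<Rightarrow> (nat \<Rightarrow> nat \<Rightarrow> complex mat) \<Rightarrow> complex mat \<Rightarrow> complex mat" where
  "block_channel R T D H A = mat (R*D) (T*D)
     (\<lambda>(i,j). (H (i div D) (j div D) * A) $$ (i mod D, j mod D))"

end

theory Submission
  imports Defs
begin


definition om :: "nat \<Rightarrow> int \<Rightarrow> complex" where
  "om D z = cis (- 2 * pi * of_int z / of_nat D)"
lemma om_add: "om D (a + b) = om D a * om D b"
proof -
  have "- 2 * pi * of_int (a+b) / of_nat D = - 2 * pi * of_int a / of_nat D + - 2 * pi * of_int b / of_nat D"
    by (simp add: add_divide_distrib[symmetric] algebra_simps)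
  then show ?thesis by (simp add: om_def cis_mult)
qed
lemma om_mult_D: "D > 0 \<Longrightarrow> om D (int D * q) = 1"
proof -
  assume "D > 0"
  have "om D (int D * q) = cis (2 * pi * of_int (- q))" unfolding om_def using \<open>D>0\<close> by (simp add: algebra_simps)
  also have "\<dots> = 1" by (rule cis_multiple_2pi) simp
  finally show ?thesis .
qed
lemma om_mod: "D > 0 \<Longrightarrow> om D (a mod int D) = om D a"
proof -
  assume D: "D > 0"
  have "om D a = om D (a mod int D + int D * (a div int D))" by simp
  also have "\<dots> = om D (a mod int D)" by (simp only: om_add om_mult_D[OF D]) simp
  finally show ?thesis by simp
qed
lemma dft_entry: "i < D \<Longrightarrow> j < D \<Longrightarrow> dft_mat D $$ (i,j) = om D (int i * int j) / complex_of_real (sqrt (real D))"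
  unfolding dft_mat_def om_def by (simp add: cis_conv_exp algebra_simps)


lemma mult_entry: "A \<in> carrier_mat nr n \<Longrightarrow> B \<in> carrier_mat n nc \<Longrightarrow> i < nr \<Longrightarrow> j < nc \<Longrightarrow>
  (A * B) $$ (i,j) = (\<Sum>k<n. A $$ (i,k) * B $$ (k,j))"
  by (auto simp: scalar_prod_def atLeast0LessThan intro!: sum.cong)

lemma sum_delta_mult: "c < (n::nat) \<Longrightarrow> (\<Sum>k<n. (if k = c then 1 else 0) * h k) = (h c :: 'a::semiring_1)"
proof -
  assume c: "c < n"
  have "(\<Sum>k<n. (if k = c then 1 else 0) * h k) = (\<Sum>k<n. if k = c then h k else 0)"
    by (intro sum.cong) auto
  also have "\<dots> = h c" using c by simp
  finally show ?thesis .
qed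

lemma sum_delta_mult': "c < (n::nat) \<Longrightarrow> (\<Sum>k<n. h k * (if k = c then 1 else 0)) = (h c :: 'a::semiring_1)"
  proof -
  assume c: "c < n"
  have "(\<Sum>k<n. h k * (if k = c then 1 else 0)) = (\<Sum>k<n. if k = c then h k else 0)"
    by (intro sum.cong) auto
  also have "\<dots> = h c" using c by simp
  finally show ?thesis .
qed

locale permq =
  fixes Q :: "complex mat" and n :: nat and f g :: "nat \<Rightarrow> nat"
  assumes Q: "Q \<in> carrier_mat n n"
    and f: "\<And>y. y < n \<Longrightarrow> f y < n" and g: "\<And>x. x < n \<Longrightarrow> g x < n"
    and e1: "\<And>x y. x < n \<Longrightarrow> y < n \<Longrightarrow> Q $$ (x,y) = (if x = f y then 1 else 0)"
    and e2: "\<And>x y. x < n \<Longrightarrow> y < n \<Longrightarrow> Q $$ (x,y) = (if y = g x then 1 else 0)"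
begin

lemma gf: "y < n \<Longrightarrow> g (f y) = y"
  using e1[of "f y" y] e2[of "f y" y] f[of y] by (auto split: if_splits)

lemma herm_mult: "herm Q * Q = 1\<^sub>m n"
proof (rule eq_matI)
  have hQ: "herm Q \<in> carrier_mat n n" using Q by (simp add: herm_def)
  fix i j assume ij: "i < dim_row (1\<^sub>m n)" "j < dim_col (1\<^sub>m n)"
  hence ij': "i < n" "j < n" by auto
  have "(herm Q * Q) $$ (i,j) = (\<Sum>k<n. herm Q $$ (i,k) * Q $$ (k,j))"
    by (rule mult_entry[OF hQ Q ij'])
  also have "\<dots> = (\<Sum>k<n. (if k = f i then 1 else 0) * Q $$ (k,j))"
    using Q ij' by (intro sum.cong) (auto simp: herm_def e1)
  also have "\<dots> = Q $$ (f i, j)" by (rule sum_delta_mult[OF f[OF ij'(1)]]) 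
  also have "\<dots> = 1\<^sub>m n $$ (i,j)" using e2[of "f i" j] gf[of i] f[of i] ij' by auto
  finally show "(herm Q * Q) $$ (i,j) = 1\<^sub>m n $$ (i,j)" .
qed (use Q in \<open>auto simp: herm_def\<close>)

lemma trans_mult: "transpose_mat Q * Q = 1\<^sub>m n"
proof (rule eq_matI)
  fix i j assume ij: "i < dim_row (1\<^sub>m n)" "j < dim_col (1\<^sub>m n)"
  hence ij': "i < n" "j < n" by auto
  have "(transpose_mat Q * Q) $$ (i,j) = (\<Sum>k<n. transpose_mat Q $$ (i,k) * Q $$ (k,j))"
    by (rule mult_entry[OF _ Q ij']) (use Q in simp)
  also have "\<dots> = (\<Sum>k<n. (if k = f i then 1 else 0) * Q $$ (k,j))"
    using Q ij' by (intro sum.cong) (auto simp: e1)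
  also have "\<dots> = Q $$ (f i, j)" by (rule sum_delta_mult[OF f[OF ij'(1)]]) 
  also have "\<dots> = 1\<^sub>m n $$ (i,j)" using e2[of "f i" j] gf[of i] f[of i] ij' by auto
  finally show "(transpose_mat Q * Q) $$ (i,j) = 1\<^sub>m n $$ (i,j)" .
qed (use Q in auto)

lemma left_entry: "Y \<in> carrier_mat n m \<Longrightarrow> i < n \<Longrightarrow> j < m \<Longrightarrow> (Q * Y) $$ (i,j) = Y $$ (g i, j)"
proof -
  assume Y: "Y \<in> carrier_mat n m" and ij: "i < n" "j < m"
  have "(Q * Y) $$ (i,j) = (\<Sum>k<n. Q $$ (i,k) * Y $$ (k,j))" by (rule mult_entry[OF Q Y ij])
  also have "\<dots> = (\<Sum>k<n. (if k = g i then 1 else 0) * Y $$ (k,j))"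
    using ij by (intro sum.cong) (auto simp: e2)
  also have "\<dots> = Y $$ (g i, j)" by (rule sum_delta_mult[OF g[OF ij(1)]])
  finally show ?thesis .
qed

lemma right_entry: "Y \<in> carrier_mat m n \<Longrightarrow> i < m \<Longrightarrow> j < n \<Longrightarrow> (Y * transpose_mat Q) $$ (i,j) = Y $$ (i, g j)"
proof -
  assume Y: "Y \<in> carrier_mat m n" and ij: "i < m" "j < n"
  have "(Y * transpose_mat Q) $$ (i,j) = (\<Sum>k<n. Y $$ (i,k) * transpose_mat Q $$ (k,j))"
    by (rule mult_entry[OF Y _ ij]) (use Q in simp)
  also have "\<dots> = (\<Sum>k<n. Y $$ (i,k) * (if k = g j then 1 else 0))"
    using ij Q by (intro sum.cong) (auto simp: e2)
  also have "\<dots> = Y $$ (i, g j)" by (rule sum_delta_mult'[OF g[OF ij(2)]])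
  finally show ?thesis .
qed
end

definition tau0 :: "nat \<Rightarrow> nat \<Rightarrow> nat \<Rightarrow> nat" where
  "tau0 A B b = (b mod A) * B + b div A"

lemma tau0_lt: "A > 0 \<Longrightarrow> b < A * B \<Longrightarrow> tau0 A B b < A * B"
proof -
  assume A: "A > 0" and b: "b < A * B"
  have "b div A < B" using b A by (simp add: div_less_iff_less_mult mult.commute)
  moreover have "b mod A < A" using A by simp
  ultimately have "(b mod A) * B + b div A < (b mod A) * B + B" by simp
  also have "\<dots> = (b mod A + 1) * B" by simp
  also have "\<dots> \<le> A * B" using \<open>b mod A < A\<close> by (intro mult_right_mono) auto
  finally show ?thesis by (simp add: tau0_def)
qed

lemma tau0_char: "A > 0 \<Longrightarrow> B > 0 \<Longrightarrow> a < A * B \<Longrightarrow> b < A * B \<Longrightarrow>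
   (a div B = b mod A \<and> a mod B = b div A) \<longleftrightarrow> a = tau0 A B b"
proof -
  assume A: "A > 0" and B: "B > 0" and a: "a < A*B" and b: "b < A*B"
  have bA: "b div A < B" using b A by (simp add: div_less_iff_less_mult mult.commute)
  show ?thesis
  proof
    assume "a div B = b mod A \<and> a mod B = b div A"
    then show "a = tau0 A B b" unfolding tau0_def by (metis div_mult_mod_eq)
  next
    assume "a = tau0 A B b"
    then show "a div B = b mod A \<and> a mod B = b div A" unfolding tau0_def using bA B
      by simp
  qed
qed

lemma perm_S_e1: "A > 0 \<Longrightarrow> B > 0 \<Longrightarrow> a < A * B \<Longrightarrow> b < A * B \<Longrightarrow>
  perm_S A B $$ (a,b) = (if a = tau0 A B b then 1 else 0)"
  using tau0_char[of A B a b] by (simp add: perm_S_def)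

lemma perm_S_e2: "A > 0 \<Longrightarrow> B > 0 \<Longrightarrow> a < A * B \<Longrightarrow> b < A * B \<Longrightarrow>
  perm_S A B $$ (a,b) = (if b = tau0 B A a then 1 else 0)"
  using tau0_char[of B A b a] by (auto simp: perm_S_def mult.commute)



lemma lin_lt: "a < (N::nat) \<Longrightarrow> r < M \<Longrightarrow> a * M + r < N * M"
proof -
  assume "a < N" "r < M"
  hence "a * M + r < a * M + M" by simp
  also have "\<dots> = (a+1) * M" by simp
  also have "\<dots> \<le> N * M" using \<open>a < N\<close> by (intro mult_right_mono) auto
  finally show ?thesis .
qed

lemma divmod_eq_iff: "r < (M::nat) \<Longrightarrow> (x = a * M + r) \<longleftrightarrow> (x div M = a \<and> x mod M = r)"
proof
  assume r: "r < M" and "x = a * M + r"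
  then show "x div M = a \<and> x mod M = r" by simp
next
  assume "x div M = a \<and> x mod M = r"
  then show "x = a * M + r" by (metis div_mult_mod_eq)
qed

lemma kron_S_I: assumes "A > 0" "B > 0" "M > 0"
  shows "permq (kron (perm_S A B) (1\<^sub>m M)) (A*B*M) (\<lambda>y. tau0 A B (y div M) * M + y mod M)
     (\<lambda>x. tau0 B A (x div M) * M + x mod M)"
proof
  show "kron (perm_S A B) (1\<^sub>m M) \<in> carrier_mat (A * B * M) (A * B * M)"
    by (simp add: kron_def perm_S_def)
  fix y assume y: "y < A*B*M"
  hence yd: "y div M < A * B" using assms by (simp add: div_less_iff_less_mult)
  show "tau0 A B (y div M) * M + y mod M < A * B * M"
    using tau0_lt[OF assms(1) yd] assms by (intro lin_lt) auto
  have yd': "y div M < B * A" using yd by (simp add: mult.commute)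
  show "tau0 B A (y div M) * M + y mod M < A * B * M"
    using tau0_lt[OF assms(2) yd'] assms by (subst mult.commute[of A B], intro lin_lt) auto
next
  fix x y assume x: "x < A*B*M" and y: "y < A*B*M"
  have xd: "x div M < A * B" using x assms by (simp add: div_less_iff_less_mult)
  have yd: "y div M < A * B" using y assms by (simp add: div_less_iff_less_mult)
  have ent: "kron (perm_S A B) (1\<^sub>m M) $$ (x,y) = perm_S A B $$ (x div M, y div M) * 1\<^sub>m M $$ (x mod M, y mod M)"
    using x y by (simp add: kron_def perm_S_def)
  show "kron (perm_S A B) (1\<^sub>m M) $$ (x,y) = (if x = tau0 A B (y div M) * M + y mod M then 1 else 0)"
    unfolding ent perm_S_e1[OF assms(1,2) xd yd] using assms
    by (subst divmod_eq_iff) auto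
  show "kron (perm_S A B) (1\<^sub>m M) $$ (x,y) = (if y = tau0 B A (x div M) * M + x mod M then 1 else 0)"
    unfolding ent perm_S_e2[OF assms(1,2) xd yd] using assms
    by (subst divmod_eq_iff) auto
qed


lemma kron_I_S: assumes "T > 0" "A > 0" "B > 0"
  shows "permq (kron (1\<^sub>m T) (perm_S A B)) (T*(A*B)) (\<lambda>y. (y div (A*B)) * (A*B) + tau0 A B (y mod (A*B)))
     (\<lambda>x. (x div (A*B)) * (A*B) + tau0 B A (x mod (A*B)))"
proof
  have AB: "A * B > 0" using assms by simp
  show "kron (1\<^sub>m T) (perm_S A B) \<in> carrier_mat (T * (A * B)) (T * (A * B))"
    by (simp add: kron_def perm_S_def)
  fix y assume y: "y < T*(A*B)"
  hence yd: "y div (A*B) < T" using assms by (simp add: div_less_iff_less_mult)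
  have ym: "y mod (A*B) < A*B" using AB by simp
  show "y div (A*B) * (A*B) + tau0 A B (y mod (A*B)) < T * (A*B)"
    using tau0_lt[OF assms(2) ym] yd by (intro lin_lt) auto
  have ym': "y mod (A*B) < B*A" using ym by (simp add: mult.commute)
  show "y div (A*B) * (A*B) + tau0 B A (y mod (A*B)) < T * (A*B)"
    using tau0_lt[OF assms(3) ym'] yd by (intro lin_lt) (auto simp: mult.commute)
next
  have AB: "A * B > 0" using assms by simp
  fix x y assume x: "x < T*(A*B)" and y: "y < T*(A*B)"
  have xd: "x div (A*B) < T" using x assms by (simp add: div_less_iff_less_mult)
  have yd: "y div (A*B) < T" using y assms by (simp add: div_less_iff_less_mult)
  have xm: "x mod (A*B) < A*B" "y mod (A*B) < A*B" using AB by auto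
  have ent: "kron (1\<^sub>m T) (perm_S A B) $$ (x,y) = 1\<^sub>m T $$ (x div (A*B), y div (A*B)) * perm_S A B $$ (x mod (A*B), y mod (A*B))"
    using x y by (simp add: kron_def perm_S_def)
  show "kron (1\<^sub>m T) (perm_S A B) $$ (x,y) = (if x = y div (A*B) * (A*B) + tau0 A B (y mod (A*B)) then 1 else 0)"
    unfolding ent perm_S_e1[OF assms(2,3) xm] using xd yd tau0_lt[OF assms(2) xm(2)]
    by (subst divmod_eq_iff) auto
  show "kron (1\<^sub>m T) (perm_S A B) $$ (x,y) = (if y = x div (A*B) * (A*B) + tau0 B A (x mod (A*B)) then 1 else 0)"
    unfolding ent perm_S_e2[OF assms(2,3) xm] using xd yd tau0_lt[OF assms(3), of "x mod (A*B)" A] xm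
    by (subst divmod_eq_iff) (auto simp: mult.commute)
qed

lemma cyc_entry: "D > 0 \<Longrightarrow> x < D \<Longrightarrow> y < D \<Longrightarrow> cyc_shift D $$ (x,y) = (if x = (y + 1) mod D then 1 else 0)"
proof -
  assume D: "D > 0" and xy: "x < D" "y < D"
  have "((x = 0 \<and> y = D - 1) \<or> (x \<ge> 1 \<and> y = x - 1)) \<longleftrightarrow> x = (y + 1) mod D"
  proof (cases "y = D - 1")
    case True
    then have "y + 1 = D" using D by simp
    then show ?thesis using True xy by auto
  next
    case False
    then have "y + 1 < D" using xy by simp
    then show ?thesis using False xy by auto
  qed
  then show ?thesis using xy by (simp add: cyc_shift_def)
qed



lemma mod_2D: "(z::nat) < 2 * D \<Longrightarrow> z mod D = (if z < D then z else z - D)"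
proof (cases "z < D")
  case False
  assume "z < 2 * D"
  hence "z - D < D" using False by simp
  moreover have "z mod D = (z - D) mod D" using False by (simp add: le_mod_geq)
  ultimately show ?thesis using False by simp
qed simp

lemma shift_iff: "l < D \<Longrightarrow> x < D \<Longrightarrow> y < (D::nat) \<Longrightarrow> (y = (x + l) mod D) \<longleftrightarrow> (x = (y + D - l) mod D)"
proof -
  assume l: "l < D" and x: "x < D" and y: "y < D"
  have e1: "(x + l) mod D = (if x + l < D then x + l else x + l - D)" using x l by (intro mod_2D) simp
  have e2: "(y + D - l) mod D = (if y + D - l < D then y + D - l else y + D - l - D)" using y l by (intro mod_2D) simp
  show ?thesis unfolding e1 e2 using l x y by auto
qed

lemma cyc_pow_entry: "D > 0 \<Longrightarrow> x < D \<Longrightarrow> y < D \<Longrightarrow> (cyc_shift D ^\<^sub>m l) $$ (x,y) = (if x = (y + l) mod D then 1 else 0)"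
proof (induction l arbitrary: x y)
  case 0
  have "cyc_shift D ^\<^sub>m 0 = 1\<^sub>m D" by (simp add: cyc_shift_def)
  then show ?case using 0 by simp
next
  case (Suc l)
  have C: "cyc_shift D \<in> carrier_mat D D" by (simp add: cyc_shift_def)
  have Cl: "cyc_shift D ^\<^sub>m l \<in> carrier_mat D D" by (rule carrier_matI) (use C in auto)
  have "(cyc_shift D ^\<^sub>m Suc l) $$ (x,y) = (\<Sum>k<D. (cyc_shift D ^\<^sub>m l) $$ (x,k) * cyc_shift D $$ (k,y))"
    by (simp only: pow_mat.simps) (rule mult_entry[OF Cl C Suc.prems(2,3)])
  also have "\<dots> = (\<Sum>k<D. (cyc_shift D ^\<^sub>m l) $$ (x,k) * (if k = (y+1) mod D then 1 else 0))"
    using Suc.prems by (intro sum.cong) (auto simp: cyc_entry)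
  also have "\<dots> = (cyc_shift D ^\<^sub>m l) $$ (x, (y+1) mod D)"
    by (rule sum_delta_mult') (use Suc.prems in simp)
  also have "\<dots> = (if x = ((y+1) mod D + l) mod D then 1 else 0)"
    using Suc.prems by (subst Suc.IH) auto
  also have "((y+1) mod D + l) mod D = (y + Suc l) mod D" by (simp add: mod_add_left_eq)
  finally show ?case .
qed

lemma cycT_permq: assumes "D > 0" "l < D"
  shows "permq (transpose_mat (cyc_shift D ^\<^sub>m l)) D (\<lambda>y. (y + D - l) mod D) (\<lambda>x. (x + l) mod D)"
proof
  have C: "cyc_shift D \<in> carrier_mat D D" by (simp add: cyc_shift_def)
  have "cyc_shift D ^\<^sub>m l \<in> carrier_mat D D" by (rule carrier_matI) (use C in auto)
  then show "transpose_mat (cyc_shift D ^\<^sub>m l) \<in> carrier_mat D D" by simp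
  fix y assume "y < D" then show "(y + D - l) mod D < D" "(y + l) mod D < D" using assms by auto
next
  have C: "cyc_shift D \<in> carrier_mat D D" by (simp add: cyc_shift_def)
  fix x y assume x: "x < D" and y: "y < D"
  have e: "transpose_mat (cyc_shift D ^\<^sub>m l) $$ (x,y) = (if y = (x + l) mod D then 1 else 0)"
    using x y C assms by (subst index_transpose_mat) (auto simp: cyc_pow_entry)
  show "transpose_mat (cyc_shift D ^\<^sub>m l) $$ (x,y) = (if y = (x + l) mod D then 1 else 0)" by (rule e)
  show "transpose_mat (cyc_shift D ^\<^sub>m l) $$ (x,y) = (if x = (y + D - l) mod D then 1 else 0)"
    unfolding e using shift_iff[OF assms(2) x y] by simp
qed



lemma herm_index[simp]: "i < dim_col A \<Longrightarrow> j < dim_row A \<Longrightarrow> herm A $$ (i,j) = cnj (A $$ (j,i))"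
  "dim_row (herm A) = dim_col A" "dim_col (herm A) = dim_row A"
  by (auto simp: herm_def)

lemma dft_dims[simp]: "dim_row (dft_mat D) = D" "dim_col (dft_mat D) = D" by (auto simp: dft_mat_def)

lemma herm_carrier[simp]: "A \<in> carrier_mat nr nc \<Longrightarrow> herm A \<in> carrier_mat nc nr"
  by (simp add: herm_def)

lemma herm_mult_distrib: "A \<in> carrier_mat nr n \<Longrightarrow> B \<in> carrier_mat n nc \<Longrightarrow> herm (A * B) = herm B * herm A"
proof (rule eq_matI)
  assume A: "A \<in> carrier_mat nr n" and B: "B \<in> carrier_mat n nc"
  fix i j assume "i < dim_row (herm B * herm A)" "j < dim_col (herm B * herm A)"
  hence ij: "i < nc" "j < nr" using A B by (auto simp: herm_def)
  have "herm (A * B) $$ (i,j) = cnj ((A * B) $$ (j,i))" using ij A B by (simp add: herm_def)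
  also have "\<dots> = cnj (\<Sum>k<n. A $$ (j,k) * B $$ (k,i))" by (subst mult_entry[OF A B ij(2,1)]) simp
  also have "\<dots> = (\<Sum>k<n. herm B $$ (i,k) * herm A $$ (k,j))"
    using ij A B by (simp add: herm_def mult.commute)
  also have "\<dots> = (herm B * herm A) $$ (i,j)" by (rule mult_entry[symmetric]) (use A B ij in auto)
  finally show "herm (A * B) $$ (i,j) = (herm B * herm A) $$ (i,j)" .
qed (auto simp: herm_def)

lemma om_cnj: "cnj (om D z) = om D (- z)"
  by (simp add: om_def cis_cnj)

lemma om_pow: "om D (int k * z) = om D z ^ k"
proof (induction k)
  case (Suc k)
  have "int (Suc k) * z = z + int k * z" by (simp add: algebra_simps)
  then show ?case using Suc by (simp only: om_add) simp
qed (simp add: om_def)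

lemma om_ne_1: assumes "D > 0" "w \<noteq> 0" "\<bar>w\<bar> < int D" shows "om D w \<noteq> 1"
proof
  assume "om D w = 1"
  hence "cos (- 2 * pi * of_int w / of_nat D) = 1" by (simp add: om_def complex_eq_iff)
  then obtain n :: int where n: "- 2 * pi * of_int w / of_nat D = of_int n * 2 * pi"
    by (subst (asm) cos_one_2pi_int) blast
  hence "pi * real_of_int (- w) = pi * real_of_int (n * int D)" using assms(1)
    by (simp add: field_simps)
  hence "real_of_int (- w) = real_of_int (n * int D)" using pi_gt_zero
    by (metis mult_cancel_left less_irrefl)
  hence w: "- w = n * int D" by (simp only: of_int_eq_iff)
  hence "\<bar>w\<bar> = \<bar>n\<bar> * int D" by (metis abs_minus_cancel abs_mult abs_of_nat)
  moreover have "n \<noteq> 0" using w assms(2) by auto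
  moreover have "\<bar>n\<bar> \<ge> 1" using \<open>n \<noteq> 0\<close> by linarith
  ultimately have "\<bar>w\<bar> \<ge> int D" by (metis mult_le_cancel_right1 of_nat_0_le_iff mult_right_mono mult_1)
  thus False using assms(3) by simp
qed

lemma dft_carrier: "dft_mat D \<in> carrier_mat D D" by (simp add: dft_mat_def)

lemma dft_unitary: assumes D: "D > 0" shows "herm (dft_mat D) * dft_mat D = 1\<^sub>m D"
proof (rule eq_matI)
  fix i j assume "i < dim_row (1\<^sub>m D)" "j < dim_col (1\<^sub>m D)"
  hence ij: "i < D" "j < D" by auto
  let ?s = "complex_of_real (sqrt (real D))"
  have s2: "?s * ?s = of_nat D" using D by (simp flip: of_real_mult)
  have "(herm (dft_mat D) * dft_mat D) $$ (i,j) = (\<Sum>k<D. herm (dft_mat D) $$ (i,k) * dft_mat D $$ (k,j))"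
    by (rule mult_entry[OF _ dft_carrier ij]) (simp add: dft_carrier)
  also have "\<dots> = (\<Sum>k<D. om D (int j - int i) ^ k / (?s * ?s))"
  proof (intro sum.cong refl)
    fix k assume k: "k \<in> {..<D}"
    have "herm (dft_mat D) $$ (i,k) * dft_mat D $$ (k,j) = cnj (om D (int k * int i)) * om D (int k * int j) / (?s * ?s)"
      using k ij by (simp add: dft_entry)
    also have "cnj (om D (int k * int i)) * om D (int k * int j) = om D (int k * (int j - int i))"
      by (simp add: om_cnj om_add[symmetric] algebra_simps)
    finally show "herm (dft_mat D) $$ (i,k) * dft_mat D $$ (k,j) = om D (int j - int i) ^ k / (?s * ?s)"
      by (simp add: om_pow)
  qed
  also have "\<dots> = (\<Sum>k<D. om D (int j - int i) ^ k) / of_nat D"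
    by (simp add: sum_divide_distrib s2)
  also have "\<dots> = 1\<^sub>m D $$ (i,j)"
  proof (cases "i = j")
    case True
    then show ?thesis using ij D by (simp add: om_def)
  next
    case False
    have ne: "om D (int j - int i) \<noteq> 1" using False ij D by (intro om_ne_1) auto
    have "om D (int j - int i) ^ D = 1" using om_pow[of D D "int j - int i"] om_mult_D[OF D] by simp
    then have "(\<Sum>k<D. om D (int j - int i) ^ k) = 0" using ne by (simp add: geometric_sum)
    then show ?thesis using False ij by simp
  qed
  finally show "(herm (dft_mat D) * dft_mat D) $$ (i,j) = 1\<^sub>m D $$ (i,j)" .
qed (auto simp: herm_def dft_mat_def)



lemma shift_inv: "D > 0 \<Longrightarrow> s < (D::nat) \<Longrightarrow> ((s + p) mod D + (D - p mod D)) mod (D::nat) = s"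
proof -
  assume D: "D > 0" and s: "s < D"
  have "((s + p) mod D + (D - p mod D)) mod D = (s + p + (D - p mod D)) mod D" by (simp add: mod_add_left_eq)
  also have "s + p + (D - p mod D) = s + D * (p div D + 1)"
  proof -
    obtain q r where qr: "q = p div D" "r = p mod D" by simp
    have p: "p = D * q + r" using qr by simp
    have r: "r < D" using qr D by simp
    have "D * (q + 1) = D * q + D" by (simp add: distrib_left)
    then show ?thesis unfolding qr(2)[symmetric] qr(1)[symmetric] using p r by linarith
  qed
  also have "(s + D * (p div D + 1)) mod D = s" using s by (simp only: mod_mult_self2) simp
  finally show ?thesis .
qed

lemma sum_shift_mod: assumes D: "(D::nat) > 0" shows "(\<Sum>n<D. f n) = (\<Sum>s<D. f ((s + p) mod D))"
proof -
  let ?h = "\<lambda>s. (s + p) mod D"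
  have inj: "inj_on ?h {..<D}"
  proof (rule inj_onI)
    fix x y assume x: "x \<in> {..<D}" and y: "y \<in> {..<D}" and e: "?h x = ?h y"
    have "x = (?h x + (D - p mod D)) mod D" using shift_inv[OF D, of x p] x by simp
    also have "\<dots> = (?h y + (D - p mod D)) mod D" using e by simp
    also have "\<dots> = y" using shift_inv[OF D, of y p] y by simp
    finally show "x = y" .
  qed
  have img: "?h ` {..<D} = {..<D}" by (rule endo_inj_surj) (use inj D in auto)
  have "bij_betw ?h {..<D} {..<D}" using inj img by (simp add: bij_betw_def)
  from sum.reindex_bij_betw[OF this, of f] show ?thesis by simp
qed



lemma om_int_mod: "D > 0 \<Longrightarrow> om D ((a mod int D) * b) = om D (a * b)"
proof -
  assume D: "D > 0"
  have "om D ((a mod int D) * b) = om D (((a mod int D) * b) mod int D)" using om_mod[OF D] by simp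
  also have "((a mod int D) * b) mod int D = (a * b) mod int D" by (simp add: mod_mult_left_eq)
  also have "om D \<dots> = om D (a * b)" using om_mod[OF D] by simp
  finally show ?thesis .
qed

lemma om_nat_mod: "D > 0 \<Longrightarrow> om D (a * int (b mod D)) = om D (a * int b)"
  using om_int_mod[of D "int b" a] by (simp add: of_nat_mod mult.commute)

lemma WH: assumes D: "D > 0" and H: "is_circulant D H"
  shows "\<exists>lam. \<forall>q<D. \<forall>p<D. (dft_mat D * H) $$ (q,p) = lam q * dft_mat D $$ (q,p)"
proof -
  from H obtain h where Hc: "H \<in> carrier_mat D D" and h: "\<And>i j. i<D \<Longrightarrow> j<D \<Longrightarrow> H $$ (i,j) = h ((i + D - j) mod D)"
    unfolding is_circulant_def by blast
  let ?s = "complex_of_real (sqrt (real D))"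
  let ?lam = "\<lambda>q. \<Sum>t<D. om D (int q * int t) * h t"
  have "\<forall>q<D. \<forall>p<D. (dft_mat D * H) $$ (q,p) = ?lam q * dft_mat D $$ (q,p)"
  proof (intro allI impI)
    fix q p assume q: "q < D" and p: "p < D"
    have "(dft_mat D * H) $$ (q,p) = (\<Sum>n<D. dft_mat D $$ (q,n) * H $$ (n,p))"
      by (rule mult_entry[OF dft_carrier Hc q p])
    also have "\<dots> = (\<Sum>n<D. om D (int q * int n) / ?s * h ((n + D - p) mod D))"
      using q p by (intro sum.cong) (auto simp: dft_entry h)
    also have "\<dots> = (\<Sum>t<D. om D (int q * int ((t + p) mod D)) / ?s * h (((t + p) mod D + D - p) mod D))"
      by (rule sum_shift_mod[OF D, of "\<lambda>n. om D (int q * int n) / ?s * h ((n + D - p) mod D)" p])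
    also have "\<dots> = (\<Sum>t<D. om D (int q * int p) / ?s * (om D (int q * int t) * h t))"
    proof (intro sum.cong refl)
      fix t assume "t \<in> {..<D}"
      hence t: "t < D" by simp
      have e1: "((t + p) mod D + D - p) mod D = t"
        using shift_iff[OF p t, of "(t + p) mod D"] D t by simp
      have e2: "om D (int q * int ((t + p) mod D)) = om D (int q * int t) * om D (int q * int p)"
      proof -
        have "om D (int q * int ((t + p) mod D)) = om D (int q * int (t + p))" by (rule om_nat_mod[OF D])
        also have "int q * int (t + p) = int q * int t + int q * int p" by (simp add: distrib_left)
        finally show ?thesis by (simp only: om_add)
      qed
      show "om D (int q * int ((t + p) mod D)) / ?s * h (((t + p) mod D + D - p) mod D) =
          om D (int q * int p) / ?s * (om D (int q * int t) * h t)" unfolding e1 e2 by (simp only: divide_inverse mult_ac)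
    qed
    also have "\<dots> = ?lam q * dft_mat D $$ (q,p)"
      using q p by (simp only: dft_entry sum_distrib_right) (simp add: algebra_simps)
    finally show "(dft_mat D * H) $$ (q,p) = ?lam q * dft_mat D $$ (q,p)" .
  qed
  then show ?thesis by (intro exI[of _ ?lam])
qed



lemma gfdm_exp: assumes "K > 0" "M > 0"
  shows "exp (2 * pi * \<i> * of_nat (k * n) / of_nat K) = om (K*M) (- (int (k*M) * int n))"
proof -
  have "- 2 * pi * real_of_int (- (int (k*M) * int n)) / real (K*M) = 2 * pi * real (k * n) / real K"
    using assms by (simp add: field_simps)
  then have "om (K*M) (- (int (k*M) * int n)) = cis (2 * pi * real (k * n) / real K)"
    unfolding om_def by simp
  also have "\<dots> = exp (2 * pi * \<i> * of_nat (k * n) / of_nat K)"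
    by (simp add: cis_conv_exp algebra_simps)
  finally show ?thesis by simp
qed

lemma gfdm_entry: assumes "K > 0" "M > 0" "n < K*M" "c < K*M"
  shows "gfdm_mat K M g $$ (n,c) = g $ nat ((int n - int (c div K) * int K) mod int (K*M)) * om (K*M) (- (int ((c mod K)*M) * int n))"
  using assms gfdm_exp[OF assms(1,2), of "c mod K" n] by (simp add: gfdm_mat_def)

lemma gfdm_carrier: "gfdm_mat K M g \<in> carrier_mat (K*M) (K*M)" by (simp add: gfdm_mat_def)

lemma WA: assumes K: "K > 0" and M: "M > 0" and g: "g \<in> carrier_vec (K*M)" and q: "q < K*M" and c: "c < K*M"
  shows "(dft_mat (K*M) * gfdm_mat K M g) $$ (q,c) =
    om (K*M) ((int q - int ((c mod K)*M)) * int ((c div K)*K)) *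
    (dft_mat (K*M) *\<^sub>v g) $ nat ((int q - int ((c mod K)*M)) mod int (K*M))"
proof -
  define D where "D = K*M"
  have D: "D > 0" using K M by (simp add: D_def)
  let ?s = "complex_of_real (sqrt (real D))"
  let ?k = "int ((c mod K)*M)" and ?m = "(c div K) * K"
  let ?a = "int q - ?k"
  have "(dft_mat D * gfdm_mat K M g) $$ (q,c) = (\<Sum>n<D. dft_mat D $$ (q,n) * gfdm_mat K M g $$ (n,c))"
    by (rule mult_entry[OF dft_carrier]) (use gfdm_carrier q c in \<open>auto simp: D_def\<close>)
  also have "\<dots> = (\<Sum>n<D. om D (int q * int n) / ?s * (g $ nat ((int n - int (c div K) * int K) mod int D) * om D (- ?k * int n)))"
    using q c K M by (intro sum.cong) (auto simp: dft_entry gfdm_entry D_def)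
  also have "\<dots> = (\<Sum>t<D. (\<lambda>n. om D (int q * int n) / ?s * (g $ nat ((int n - int (c div K) * int K) mod int D) * om D (- ?k * int n))) ((t + ?m) mod D))"
    by (rule sum_shift_mod[OF D])
  also have "\<dots> = (\<Sum>t<D. om D (?a * int ?m) * (om D (?a * int t) / ?s * g $ t))"
  proof (intro sum.cong refl)
    fix t assume "t \<in> {..<D}"
    hence t: "t < D" by simp
    have idx: "nat ((int ((t + ?m) mod D) - int (c div K) * int K) mod int D) = t"
    proof -
      have "(int ((t + ?m) mod D) - int (c div K) * int K) mod int D = (int (t + ?m) mod int D - int ?m) mod int D"
        by (simp add: of_nat_mod)
      also have "\<dots> = (int (t + ?m) - int ?m) mod int D" by (simp add: mod_diff_left_eq)
      also have "\<dots> = int t" using t by simp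
      finally show ?thesis by simp
    qed
    have o1: "om D (int q * int ((t + ?m) mod D)) = om D (int q * int (t + ?m))" by (rule om_nat_mod[OF D])
    have o2: "om D (- ?k * int ((t + ?m) mod D)) = om D (- ?k * int (t + ?m))" by (rule om_nat_mod[OF D])
    have o3: "om D (int q * int (t + ?m)) * om D (- ?k * int (t + ?m)) = om D (?a * int ?m) * om D (?a * int t)"
    proof -
      have "om D (int q * int (t + ?m)) * om D (- ?k * int (t + ?m)) = om D (int q * int (t + ?m) + - ?k * int (t + ?m))"
        by (simp only: om_add)
      also have "int q * int (t + ?m) + - ?k * int (t + ?m) = ?a * int ?m + ?a * int t"
        by (simp add: algebra_simps)
      also have "om D \<dots> = om D (?a * int ?m) * om D (?a * int t)" by (simp only: om_add)
      finally show ?thesis .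
    qed
    show "(\<lambda>n. om D (int q * int n) / ?s * (g $ nat ((int n - int (c div K) * int K) mod int D) * om D (- ?k * int n))) ((t + ?m) mod D)
       = om D (?a * int ?m) * (om D (?a * int t) / ?s * g $ t)"
      unfolding idx o1 o2 using o3 by (simp only: divide_inverse mult_ac)
  qed
  also have "\<dots> = om D (?a * int ?m) * (\<Sum>t<D. om D (?a * int t) / ?s * g $ t)"
    by (simp only: sum_distrib_left)
  also have "(\<Sum>t<D. om D (?a * int t) / ?s * g $ t) = (dft_mat D *\<^sub>v g) $ nat (?a mod int D)"
  proof -
    have x: "nat (?a mod int D) < D" using D by (simp add: nat_less_iff)
    have "(dft_mat D *\<^sub>v g) $ nat (?a mod int D) = (\<Sum>t<D. dft_mat D $$ (nat (?a mod int D), t) * g $ t)"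
      using x g by (simp add: scalar_prod_def atLeast0LessThan D_def)
    also have "\<dots> = (\<Sum>t<D. om D (?a * int t) / ?s * g $ t)"
    proof (intro sum.cong refl)
      fix t assume "t \<in> {..<D}" hence t: "t < D" by simp
      have "int (nat (?a mod int D)) = ?a mod int D" using D by simp
      then show "dft_mat D $$ (nat (?a mod int D), t) * g $ t = om D (?a * int t) / ?s * g $ t"
        using x t by (simp add: dft_entry om_int_mod[OF D])
    qed
    finally show ?thesis by simp
  qed
  finally show ?thesis by (simp add: D_def)
qed



lemma int_mod_chain: "((((a::int) + l) mod D - k) mod D + D - l) mod D = (a - k) mod D"
proof -
  have "(((a + l) mod D - k) mod D + D - l) mod D = (((a + l) mod D - k) mod D + (D - l)) mod D" by (simp add: algebra_simps)
  also have "\<dots> = (((a + l) mod D - k) + (D - l)) mod D" by (simp add: mod_add_left_eq)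
  also have "\<dots> = ((a + l) mod D + (D - l - k)) mod D" by (simp add: algebra_simps)
  also have "\<dots> = (a + l + (D - l - k)) mod D" by (simp add: mod_add_left_eq)
  also have "a + l + (D - l - k) = (a - k) + D" by simp
  also have "((a - k) + D) mod D = (a - k) mod D" by simp
  finally show ?thesis .
qed

lemma zarith: assumes K: "K > 0" and M: "M > 0" and i: "i < K*M" and k: "k < K" and ne: "i div M \<noteq> k"
  shows "int M \<le> (int i - int (k*M)) mod int (K*M)"
proof (cases "i div M < k")
  case True
  hence i1: "i < k * M" using M by (simp add: div_less_iff_less_mult)
  have km: "(k+1) * M \<le> K * M" using k by (intro mult_right_mono) auto
  hence km': "int k * int M + int M \<le> int K * int M" by (simp add: algebra_simps flip: of_nat_mult of_nat_add)
  have "(int i - int (k*M)) mod int (K*M) = (int i - int (k*M)) + int (K*M)"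
  proof -
    have "(int i - int (k*M)) mod int (K*M) = ((int i - int (k*M)) + int (K*M)) mod int (K*M)" by simp
    also have "\<dots> = (int i - int (k*M)) + int (K*M)"
    proof (intro mod_pos_pos_trivial)
      have i1': "int i < int k * int M" using i1 by (metis of_nat_less_iff of_nat_mult)
      show "0 \<le> int i - int (k*M) + int (K*M)" using i1' km' by simp
      show "int i - int (k*M) + int (K*M) < int (K*M)" using i1' by simp
    qed
    finally show ?thesis .
  qed
  then show ?thesis using km' by simp
next
  case False
  hence "k + 1 \<le> i div M" using ne by simp
  hence i1: "(k+1) * M \<le> i" using div_less_iff_less_mult[OF M, of i "k+1"] by linarith
  have "k*M + M \<le> i" using i1 by (simp add: algebra_simps)
  hence a: "int (k*M) + int M \<le> int i" by (metis of_nat_add of_nat_le_iff)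
  have b: "int i < int (K*M)" using i by (metis of_nat_less_iff)
  have c0: "0 \<le> int (k*M)" by simp
  have "(int i - int (k*M)) mod int (K*M) = int i - int (k*M)"
    by (rule mod_pos_pos_trivial) (use a b c0 in linarith)+
  then show ?thesis using a by linarith
qed



lemma cyc_pow_carrier: "cyc_shift D ^\<^sub>m l \<in> carrier_mat D D"
  by (rule carrier_matI) (auto simp: cyc_shift_def)

lemma mult_vec_entry: "A \<in> carrier_mat n m \<Longrightarrow> v \<in> carrier_vec m \<Longrightarrow> i < n \<Longrightarrow>
  (A *\<^sub>v v) $ i = (\<Sum>j<m. A $$ (i,j) * v $ j)"
  by (auto simp: scalar_prod_def atLeast0LessThan intro!: sum.cong)

lemma cyc_pow_mult_vec: assumes D: "D > 0" and l: "l < D" and v: "v \<in> carrier_vec D" and x: "x < D"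
  shows "((cyc_shift D ^\<^sub>m l) *\<^sub>v v) $ x = v $ ((x + D - l) mod D)"
proof -
  have "((cyc_shift D ^\<^sub>m l) *\<^sub>v v) $ x = (\<Sum>y<D. (cyc_shift D ^\<^sub>m l) $$ (x,y) * v $ y)"
    by (rule mult_vec_entry[OF cyc_pow_carrier v x])
  also have "\<dots> = (\<Sum>y<D. (if y = (x + D - l) mod D then 1 else 0) * v $ y)"
  proof (intro sum.cong refl)
    fix y assume "y \<in> {..<D}" hence y: "y < D" by simp
    show "(cyc_shift D ^\<^sub>m l) $$ (x,y) * v $ y = (if y = (x + D - l) mod D then 1 else 0) * v $ y"
      using cyc_pow_entry[OF D x y, of l] shift_iff[OF l y x] by simp
  qed
  also have "\<dots> = v $ ((x + D - l) mod D)" by (rule sum_delta_mult) (use D in simp)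
  finally show ?thesis .
qed

lemma core:
  assumes K: "K > 0" and M: "M > 0" and g: "g \<in> carrier_vec (K*M)" and g1: "g1 \<in> carrier_vec M"
    and l: "l < K*M" and H: "is_circulant (K*M) H"
    and hyp: "of_real (sqrt (real (K*M))) \<cdot>\<^sub>v (dft_mat (K*M) *\<^sub>v g)
           = (cyc_shift (K*M) ^\<^sub>m l) *\<^sub>v (g1 @\<^sub>v 0\<^sub>v ((K-1)*M))"
    and i: "i < K*M" and c: "c < K*M" and ne: "i div M \<noteq> c mod K"
  shows "((transpose_mat (cyc_shift (K*M) ^\<^sub>m l) * dft_mat (K*M)) * (H * gfdm_mat K M g)) $$ (i,c) = 0"
proof -
  define D where "D = K*M"
  have D: "D > 0" using K M by (simp add: D_def)
  have lD: "l < D" using l by (simp add: D_def)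
  have Hc: "H \<in> carrier_mat D D" using H by (simp add: is_circulant_def D_def)
  have Ac: "gfdm_mat K M g \<in> carrier_mat D D" by (simp add: gfdm_carrier D_def)
  have Wc: "dft_mat D \<in> carrier_mat D D" by (rule dft_carrier)
  have Cc: "transpose_mat (cyc_shift D ^\<^sub>m l) \<in> carrier_mat D D" using cyc_pow_carrier[of D l] by simp
  interpret P: permq "transpose_mat (cyc_shift D ^\<^sub>m l)" D "\<lambda>y. (y + D - l) mod D" "\<lambda>x. (x + l) mod D"
    by (rule cycT_permq[OF D lD])
  have "(transpose_mat (cyc_shift D ^\<^sub>m l) * dft_mat D) * (H * gfdm_mat K M g)
      = transpose_mat (cyc_shift D ^\<^sub>m l) * ((dft_mat D * H) * gfdm_mat K M g)"
    using Cc Wc Hc Ac by (simp add: assoc_mult_mat[of _ D D _ D _ D])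
  hence "((transpose_mat (cyc_shift D ^\<^sub>m l) * dft_mat D) * (H * gfdm_mat K M g)) $$ (i,c)
      = ((dft_mat D * H) * gfdm_mat K M g) $$ ((i + l) mod D, c)"
    using P.left_entry[of "(dft_mat D * H) * gfdm_mat K M g" D i c] Wc Hc Ac i c by (simp add: D_def)
  moreover
  define q where "q = (i + l) mod D"
  have q: "q < D" using D by (simp add: q_def)
  obtain lam where lam: "\<And>q p. q < D \<Longrightarrow> p < D \<Longrightarrow> (dft_mat D * H) $$ (q,p) = lam q * dft_mat D $$ (q,p)"
    using WH[OF D, of H] H by (auto simp: D_def)
  have "((dft_mat D * H) * gfdm_mat K M g) $$ (q, c) = lam q * (dft_mat D * gfdm_mat K M g) $$ (q, c)"
  proof -
    have "((dft_mat D * H) * gfdm_mat K M g) $$ (q, c) = (\<Sum>p<D. (dft_mat D * H) $$ (q,p) * gfdm_mat K M g $$ (p,c))"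
      by (rule mult_entry[OF _ Ac q]) (use c Wc Hc in \<open>auto simp: D_def\<close>)
    also have "\<dots> = (\<Sum>p<D. lam q * (dft_mat D $$ (q,p) * gfdm_mat K M g $$ (p,c)))"
      using q by (intro sum.cong) (auto simp: lam)
    also have "\<dots> = lam q * (\<Sum>p<D. dft_mat D $$ (q,p) * gfdm_mat K M g $$ (p,c))"
      by (simp add: sum_distrib_left)
    also have "(\<Sum>p<D. dft_mat D $$ (q,p) * gfdm_mat K M g $$ (p,c)) = (dft_mat D * gfdm_mat K M g) $$ (q, c)"
      by (rule mult_entry[symmetric, OF Wc Ac q]) (use c in \<open>simp add: D_def\<close>)
    finally show ?thesis .
  qed
  moreover
  define k where "k = c mod K"
  define x where "x = nat ((int q - int (k*M)) mod int D)"
  have "(dft_mat D * gfdm_mat K M g) $$ (q, c) = om D ((int q - int (k*M)) * int ((c div K)*K)) * (dft_mat D *\<^sub>v g) $ x"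
    using WA[OF K M g, of q c] q c by (simp add: D_def k_def x_def)
  moreover have "(dft_mat D *\<^sub>v g) $ x = 0"
  proof -
    have x: "x < D" using D by (simp add: x_def nat_less_iff)
    let ?v = "g1 @\<^sub>v 0\<^sub>v ((K-1)*M)"
    have dimv: "M + (K-1)*M = D" using K by (simp add: D_def algebra_simps)
    have v: "?v \<in> carrier_vec D" using g1 dimv by (metis append_carrier_vec zero_carrier_vec)
    have "complex_of_real (sqrt (real D)) * (dft_mat D *\<^sub>v g) $ x = ((cyc_shift D ^\<^sub>m l) *\<^sub>v ?v) $ x"
      using arg_cong[OF hyp, of "\<lambda>w. w $ x"] x by (simp add: D_def)
    also have "\<dots> = ?v $ ((x + D - l) mod D)" by (rule cyc_pow_mult_vec[OF D lD v x])
    also have "\<dots> = 0"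
    proof -
      define z where "z = (x + D - l) mod D"
      have zD: "z < D" using D by (simp add: z_def)
      have "int z = (int x + int D - int l) mod int D" using lD
        by (simp add: z_def of_nat_mod of_nat_diff)
      also have "int x = (int q - int (k*M)) mod int D" using D by (simp add: x_def)
      also have "int q = (int i + int l) mod int D" by (simp add: q_def of_nat_mod)
      finally have "int z = (int i - int (k*M)) mod int D" by (simp only: int_mod_chain)
      moreover have "int M \<le> (int i - int (k*M)) mod int D"
        unfolding D_def by (rule zarith[OF K M i]) (use K ne in \<open>auto simp: k_def\<close>)
      ultimately have zM: "M \<le> z" by simp
      have "?v $ z = 0" using zM zD g1 dimv by (simp add: index_append_vec)
      then show ?thesis by (simp add: z_def)
    qed
    finally have "complex_of_real (sqrt (real D)) * (dft_mat D *\<^sub>v g) $ x = 0" .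
    moreover have "complex_of_real (sqrt (real D)) \<noteq> 0" using D by simp
    ultimately show ?thesis by simp
  qed
  ultimately show ?thesis by (simp add: D_def q_def)
qed



lemma block_sum: fixes f :: "nat \<Rightarrow> 'a::comm_monoid_add" assumes r: "r < R" and z: "\<And>p. p < R*D \<Longrightarrow> p div D \<noteq> r \<Longrightarrow> f p = 0"
  shows "(\<Sum>p<R*D. f p) = (\<Sum>s<D. f (r*D + s))"
proof -
  have "(\<Sum>p<R*D. f p) = (\<Sum>m<R. sum f {m*D..<m*D+D})" by (rule sum.nat_group[symmetric])
  also have "\<dots> = (\<Sum>m<R. if m = r then sum f {r*D..<r*D+D} else 0)"
  proof (intro sum.cong refl)
    fix m assume "m \<in> {..<R}" hence m: "m < R" by simp
    show "sum f {m*D..<m*D+D} = (if m = r then sum f {r*D..<r*D+D} else 0)"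
    proof (cases "m = r")
      case False
      have "sum f {m*D..<m*D+D} = 0"
      proof (rule sum.neutral, intro ballI)
        fix p assume p: "p \<in> {m*D..<m*D+D}"
        hence "p div D = m" by (auto intro: div_nat_eqI simp: algebra_simps)
        moreover have "p < R*D" using p m lin_lt[of m R "p - m*D" D] by auto
        ultimately show "f p = 0" using z False by auto
      qed
      then show ?thesis using False by simp
    qed simp
  qed
  also have "\<dots> = sum f {r*D..<r*D+D}" using r by simp
  also have "\<dots> = (\<Sum>s<D. f (r*D + s))"
    by (subst sum.atLeastLessThan_shift_0) (simp add: atLeast0LessThan comp_def)
  finally show ?thesis .
qed

lemma kron_I_entry: "V \<in> carrier_mat D D \<Longrightarrow> a < R*D \<Longrightarrow> p < R*D \<Longrightarrow>
   kron (1\<^sub>m R) V $$ (a,p) = (if p div D = a div D then V $$ (a mod D, p mod D) else 0)"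
proof -
  assume V: "V \<in> carrier_mat D D" and a: "a < R*D" and p: "p < R*D"
  have D: "D > 0" using a by (cases D) auto
  have "a div D < R" "p div D < R" using a p D by (auto simp: div_less_iff_less_mult)
  then show ?thesis using V a p D by (auto simp: kron_def)
qed

lemma kron_I_carrier: "V \<in> carrier_mat D D \<Longrightarrow> kron (1\<^sub>m R) V \<in> carrier_mat (R*D) (R*D)"
  by (simp add: kron_def)

lemma kron_I_unitary: assumes V: "V \<in> carrier_mat D D" and u: "herm V * V = 1\<^sub>m D"
  shows "herm (kron (1\<^sub>m R) V) * kron (1\<^sub>m R) V = 1\<^sub>m (R*D)"
proof (rule eq_matI)
  let ?KV = "kron (1\<^sub>m R) V"
  have KV: "?KV \<in> carrier_mat (R*D) (R*D)" by (rule kron_I_carrier[OF V])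
  fix i j assume "i < dim_row (1\<^sub>m (R*D))" "j < dim_col (1\<^sub>m (R*D))"
  hence ij: "i < R*D" "j < R*D" by auto
  have D: "D > 0" using ij by (cases D) auto
  have ri: "i div D < R" using ij D by (auto simp: div_less_iff_less_mult)
  have "(herm ?KV * ?KV) $$ (i,j) = (\<Sum>p<R*D. herm ?KV $$ (i,p) * ?KV $$ (p,j))"
    by (rule mult_entry[OF _ KV ij]) (use KV in simp)
  also have "\<dots> = (\<Sum>p<R*D. (if p div D = i div D then cnj (V $$ (p mod D, i mod D)) * (if j div D = p div D then V $$ (p mod D, j mod D) else 0) else 0))"
    using ij KV V by (intro sum.cong refl) (auto simp: kron_I_entry)
  also have "\<dots> = (\<Sum>s<D. cnj (V $$ (s, i mod D)) * (if j div D = i div D then V $$ (s, j mod D) else 0))"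
    by (subst block_sum[OF ri]) (use D in \<open>auto simp: mod_mult_self3 intro!: sum.cong\<close>)
  also have "\<dots> = (if j div D = i div D then (herm V * V) $$ (i mod D, j mod D) else 0)"
  proof (cases "j div D = i div D")
    case True
    have "(herm V * V) $$ (i mod D, j mod D) = (\<Sum>s<D. herm V $$ (i mod D, s) * V $$ (s, j mod D))"
      by (rule mult_entry[OF _ V]) (use V D in auto)
    also have "\<dots> = (\<Sum>s<D. cnj (V $$ (s, i mod D)) * V $$ (s, j mod D))"
      using V D by (intro sum.cong refl) auto
    finally show ?thesis using True by simp
  qed simp
  also have "\<dots> = 1\<^sub>m (R*D) $$ (i,j)"
    using ij D by (auto simp: u) (metis div_mult_mod_eq)
  finally show "(herm ?KV * ?KV) $$ (i,j) = 1\<^sub>m (R*D) $$ (i,j)" .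
qed (use V in \<open>auto simp: kron_def\<close>)

lemma kron_block_entry: assumes V: "V \<in> carrier_mat D D" and A: "A \<in> carrier_mat D D"
  and H: "\<And>r t. r < R \<Longrightarrow> t < T \<Longrightarrow> H r t \<in> carrier_mat D D"
  and a: "a < R*D" and b: "b < T*D"
  shows "(kron (1\<^sub>m R) V * block_channel R T D H A) $$ (a,b) = (V * (H (a div D) (b div D) * A)) $$ (a mod D, b mod D)"
proof -
  have D: "D > 0" using a by (cases D) auto
  have ra: "a div D < R" and tb: "b div D < T" using a b D by (auto simp: div_less_iff_less_mult)
  have Hc: "H (a div D) (b div D) * A \<in> carrier_mat D D" using H[OF ra tb] A by simp
  have "(kron (1\<^sub>m R) V * block_channel R T D H A) $$ (a,b) = (\<Sum>p<R*D. kron (1\<^sub>m R) V $$ (a,p) * block_channel R T D H A $$ (p,b))"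
    by (rule mult_entry[OF kron_I_carrier[OF V] _ a b]) (simp add: block_channel_def)
  also have "\<dots> = (\<Sum>p<R*D. if p div D = a div D then V $$ (a mod D, p mod D) * (H (a div D) (b div D) * A) $$ (p mod D, b mod D) else 0)"
    using a b V by (intro sum.cong refl) (auto simp: kron_I_entry block_channel_def)
  also have "\<dots> = (\<Sum>s<D. V $$ (a mod D, s) * (H (a div D) (b div D) * A) $$ (s, b mod D))"
    by (subst block_sum[OF ra]) (use D in \<open>auto simp: mod_mult_self3\<close>)
  also have "\<dots> = (V * (H (a div D) (b div D) * A)) $$ (a mod D, b mod D)"
    by (rule mult_entry[symmetric, OF V Hc]) (use D in auto)
  finally show ?thesis .
qed



lemma mod_div_helper: "r < (M::nat) \<Longrightarrow> x * M + r < N \<Longrightarrow> (z * N + (x * M + r)) mod N div M = x"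
  by simp

lemma arith1: assumes K: "K > 0" and M: "M > 0" and R: "R > 0" and i: "i < K*(M*R)"
  shows "((tau0 R K (i div M) * M + i mod M) mod (K*M)) div M = i div (M*R)"
proof -
  define b where "b = i div M"
  have b: "b < R*K" using i M by (simp add: b_def div_less_iff_less_mult algebra_simps)
  have bR: "b div R < K" using b R by (simp add: div_less_iff_less_mult mult.commute)
  have e: "tau0 R K b * M + i mod M = (b mod R) * (K*M) + ((b div R)*M + i mod M)"
    by (simp add: tau0_def algebra_simps)
  have lt: "(b div R)*M + i mod M < K*M" using bR M by (intro lin_lt) auto
  have "((tau0 R K b * M + i mod M) mod (K*M)) div M = b div R"
    unfolding e using lt M by simp
  also have "b div R = i div (M*R)" by (simp add: b_def div_mult2_eq)
  finally show ?thesis by (simp add: b_def)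
qed

lemma arith2: assumes K: "K > 0" and M: "M > 0" and T: "T > 0" and j: "j < K*(M*T)"
  shows "(let y = tau0 T K (j div M) * M + j mod M in
          ((y div (K*M)) * (K*M) + tau0 M K (y mod (K*M))) mod (K*M) mod K) = j div (M*T)"
proof -
  define a where "a = j div M"
  have a: "a < T*K" using j M by (simp add: a_def div_less_iff_less_mult algebra_simps)
  have aT: "a div T < K" using a T by (simp add: div_less_iff_less_mult mult.commute)
  define y where "y = tau0 T K a * M + j mod M"
  have e: "y = (a mod T) * (K*M) + ((a div T)*M + j mod M)"
    by (simp add: y_def tau0_def algebra_simps)
  have lt: "(a div T)*M + j mod M < K*M" using aT M by (intro lin_lt) auto
  have ym: "y mod (K*M) = (a div T)*M + j mod M" unfolding e using lt by simp
  have t: "tau0 M K (y mod (K*M)) = (j mod M) * K + a div T"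
    unfolding ym tau0_def using M by simp
  have tl: "tau0 M K (y mod (K*M)) < K*M" unfolding t using aT M by (subst mult.commute, intro lin_lt) auto
  have "((y div (K*M)) * (K*M) + tau0 M K (y mod (K*M))) mod (K*M) = tau0 M K (y mod (K*M))"
    using tl by simp
  also have "\<dots> mod K = a div T" unfolding t using aT by simp
  also have "a div T = j div (M*T)" by (simp add: a_def div_mult2_eq)
  finally show ?thesis by (simp add: y_def a_def Let_def)
qed



theorem theorem1:
  fixes K M R T l :: nat
    and g g1 :: "complex vec"
    and H :: "nat \<Rightarrow> nat \<Rightarrow> complex mat"
  assumes "K > 0" "M > 0" "R > 0" "T > 0"
    and "g \<in> carrier_vec (K*M)"
    and "\<And>r t. r < R \<Longrightarrow> t < T \<Longrightarrow> is_circulant (K*M) (H r t)"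
    and "g1 \<in> carrier_vec M"
    and "l < K*M"
    and "of_real (sqrt (real (K*M))) \<cdot>\<^sub>v (dft_mat (K*M) *\<^sub>v g)
           = (cyc_shift (K*M) ^\<^sub>m l) *\<^sub>v (g1 @\<^sub>v 0\<^sub>v ((K-1)*M))"
  shows "\<exists>F :: nat \<Rightarrow> complex mat. (\<forall>k<K. F k \<in> carrier_mat (M*R) (M*T)) \<and>
     block_channel R T (K*M) H (gfdm_mat K M g)
       = herm ((kron (perm_S K R) (1\<^sub>m M)) *
               (kron (1\<^sub>m R) (transpose_mat (cyc_shift (K*M) ^\<^sub>m l) * dft_mat (K*M))))
         * blkdiag K (M*R) (M*T) F
         * ((kron (perm_S K T) (1\<^sub>m M)) * (kron (1\<^sub>m T) (perm_S K M)))"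
proof -
  note K = assms(1) and M = assms(2) and R = assms(3) and T = assms(4) and g = assms(5)
    and Hcirc = assms(6) and g1 = assms(7) and l = assms(8) and hyp = assms(9)
  define D where "D = K*M"
  have D: "D > 0" using K M by (simp add: D_def)
  define V where "V = transpose_mat (cyc_shift (K*M) ^\<^sub>m l) * dft_mat (K*M)"
  define KV where "KV = kron (1\<^sub>m R) V"
  define S1 where "S1 = kron (perm_S K R) (1\<^sub>m M)"
  define S2 where "S2 = kron (perm_S K T) (1\<^sub>m M)"
  define S3 where "S3 = kron (1\<^sub>m T) (perm_S K M)"
  define U where "U = S1 * KV"
  define P where "P = S2 * S3"
  define A where "A = gfdm_mat K M g"
  define Ht where "Ht = block_channel R T (K*M) H A"
  define NR where "NR = R * D"
  define NT where "NT = T * D"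
  have Vc: "V \<in> carrier_mat D D"
    using cyc_pow_carrier[of "K*M" l] dft_carrier[of "K*M"] by (simp add: V_def D_def)
  have Ac: "A \<in> carrier_mat D D" by (simp add: A_def gfdm_carrier D_def)
  have Hc: "\<And>r t. r < R \<Longrightarrow> t < T \<Longrightarrow> H r t \<in> carrier_mat D D"
    using Hcirc by (simp add: is_circulant_def D_def)
  have KVc: "KV \<in> carrier_mat NR NR" unfolding KV_def NR_def by (rule kron_I_carrier[OF Vc])
  have Htc: "Ht \<in> carrier_mat NR NT" by (simp add: Ht_def block_channel_def NR_def NT_def D_def)
  have P1: "permq S1 NR (\<lambda>y. tau0 K R (y div M) * M + y mod M) (\<lambda>x. tau0 R K (x div M) * M + x mod M)"
  proof -
    have e: "K*R*M = NR" by (simp add: NR_def D_def)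
    from kron_S_I[OF K R M] show ?thesis unfolding S1_def e .
  qed
  have P2: "permq S2 NT (\<lambda>y. tau0 K T (y div M) * M + y mod M) (\<lambda>x. tau0 T K (x div M) * M + x mod M)"
  proof -
    have e: "K*T*M = NT" by (simp add: NT_def D_def)
    from kron_S_I[OF K T M] show ?thesis unfolding S2_def e .
  qed
  have P3: "permq S3 NT (\<lambda>y. (y div (K*M)) * (K*M) + tau0 K M (y mod (K*M))) (\<lambda>x. (x div (K*M)) * (K*M) + tau0 M K (x mod (K*M)))"
  proof -
    have e: "T*(K*M) = NT" by (simp add: NT_def D_def)
    from kron_I_S[OF T K M] show ?thesis unfolding S3_def e .
  qed
  interpret P1: permq S1 NR "\<lambda>y. tau0 K R (y div M) * M + y mod M" "\<lambda>x. tau0 R K (x div M) * M + x mod M" by (rule P1)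
  interpret P2: permq S2 NT "\<lambda>y. tau0 K T (y div M) * M + y mod M" "\<lambda>x. tau0 T K (x div M) * M + x mod M" by (rule P2)
  interpret P3: permq S3 NT "\<lambda>y. (y div (K*M)) * (K*M) + tau0 K M (y mod (K*M))" "\<lambda>x. (x div (K*M)) * (K*M) + tau0 M K (x mod (K*M))" by (rule P3)
  have S1c: "S1 \<in> carrier_mat NR NR" by (rule P1.Q)
  have S2c: "S2 \<in> carrier_mat NT NT" by (rule P2.Q)
  have S3c: "S3 \<in> carrier_mat NT NT" by (rule P3.Q)
  have Uc: "U \<in> carrier_mat NR NR" using S1c KVc by (simp add: U_def)
  have Pc: "P \<in> carrier_mat NT NT" using S2c S3c by (simp add: P_def)
  have PTc: "transpose_mat P \<in> carrier_mat NT NT" using Pc by simp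
  have hUc: "herm U \<in> carrier_mat NR NR" using Uc by simp
  have VV: "herm V * V = 1\<^sub>m D"
  proof -
    interpret C: permq "transpose_mat (cyc_shift D ^\<^sub>m l)" D "\<lambda>y. (y + D - l) mod D" "\<lambda>x. (x + l) mod D"
      by (rule cycT_permq[OF D]) (use l in \<open>simp add: D_def\<close>)
    have Wc: "dft_mat D \<in> carrier_mat D D" by (rule dft_carrier)
    have "herm V * V = (herm (dft_mat D) * herm (transpose_mat (cyc_shift D ^\<^sub>m l))) * (transpose_mat (cyc_shift D ^\<^sub>m l) * dft_mat D)"
      unfolding V_def D_def[symmetric] by (subst herm_mult_distrib[OF C.Q Wc]) rule
    also have "\<dots> = herm (dft_mat D) * ((herm (transpose_mat (cyc_shift D ^\<^sub>m l)) * transpose_mat (cyc_shift D ^\<^sub>m l)) * dft_mat D)"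
      using C.Q Wc by (simp add: assoc_mult_mat[of _ D D _ D _ D])
    also have "\<dots> = herm (dft_mat D) * dft_mat D" using Wc by (simp add: C.herm_mult)
    also have "\<dots> = 1\<^sub>m D" by (rule dft_unitary[OF D])
    finally show ?thesis .
  qed
  have UU: "herm U * U = 1\<^sub>m NR"
  proof -
    have "herm U * U = (herm KV * herm S1) * (S1 * KV)"
      unfolding U_def by (subst herm_mult_distrib[OF S1c KVc]) rule
    also have "\<dots> = herm KV * ((herm S1 * S1) * KV)"
      using S1c KVc by (simp add: assoc_mult_mat[of _ NR NR _ NR _ NR])
    also have "\<dots> = herm KV * KV" using KVc by (simp add: P1.herm_mult)
    also have "\<dots> = 1\<^sub>m NR" unfolding KV_def NR_def by (rule kron_I_unitary[OF Vc VV])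
    finally show ?thesis .
  qed
  have PP: "transpose_mat P * P = 1\<^sub>m NT"
  proof -
    have "transpose_mat P * P = (transpose_mat S3 * transpose_mat S2) * (S2 * S3)"
      unfolding P_def by (subst transpose_mult[OF S2c S3c]) rule
    also have "\<dots> = transpose_mat S3 * ((transpose_mat S2 * S2) * S3)"
      using S2c S3c by (simp add: assoc_mult_mat[of _ NT NT _ NT _ NT])
    also have "\<dots> = transpose_mat S3 * S3" using S3c by (simp add: P2.trans_mult)
    also have "\<dots> = 1\<^sub>m NT" by (rule P3.trans_mult)
    finally show ?thesis .
  qed
  define X where "X = U * Ht * transpose_mat P"
  have Xc: "X \<in> carrier_mat NR NT" using Uc Htc PTc by (simp add: X_def)
  define Y where "Y = KV * Ht"
  have Yc: "Y \<in> carrier_mat NR NT" using KVc Htc by (simp add: Y_def)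
  have Xe: "X = S1 * ((Y * transpose_mat S3) * transpose_mat S2)"
  proof -
    have "X = (S1 * KV) * Ht * (transpose_mat S3 * transpose_mat S2)"
      unfolding X_def U_def P_def by (subst transpose_mult[OF S2c S3c]) rule
    also have "\<dots> = S1 * ((KV * Ht * transpose_mat S3) * transpose_mat S2)"
      using S1c KVc Htc S2c S3c by (simp add: assoc_mult_mat[of _ NR NR _ NR _ NT] assoc_mult_mat[of _ NR NR _ NT _ NT] assoc_mult_mat[of _ NR NT _ NT _ NT])
    finally show ?thesis by (simp add: Y_def)
  qed
  have Xentry: "X $$ (i,j) = Y $$ (tau0 R K (i div M) * M + i mod M,
        (let y = tau0 T K (j div M) * M + j mod M in (y div (K*M)) * (K*M) + tau0 M K (y mod (K*M))))"
    if i: "i < NR" and j: "j < NT" for i j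
  proof -
    have Z3: "Y * transpose_mat S3 \<in> carrier_mat NR NT" using Yc S3c by simp
    have Z2: "(Y * transpose_mat S3) * transpose_mat S2 \<in> carrier_mat NR NT" using Z3 S2c by simp
    have g2: "tau0 T K (j div M) * M + j mod M < NT" using P2.g[OF j] .
    have "X $$ (i,j) = ((Y * transpose_mat S3) * transpose_mat S2) $$ (tau0 R K (i div M) * M + i mod M, j)"
      unfolding Xe by (rule P1.left_entry[OF Z2 i j])
    also have "\<dots> = (Y * transpose_mat S3) $$ (tau0 R K (i div M) * M + i mod M, tau0 T K (j div M) * M + j mod M)"
      by (rule P2.right_entry[OF Z3 P1.g[OF i] j])
    also have "\<dots> = Y $$ (tau0 R K (i div M) * M + i mod M,
        (let y = tau0 T K (j div M) * M + j mod M in (y div (K*M)) * (K*M) + tau0 M K (y mod (K*M))))"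
      unfolding Let_def by (rule P3.right_entry[OF Yc P1.g[OF i] g2])
    finally show ?thesis .
  qed
  define F where "F = (\<lambda>k. mat (M*R) (M*T) (\<lambda>(a,b). X $$ (k*(M*R) + a, k*(M*T) + b)))"
  have NRe: "K*(M*R) = NR" by (simp add: NR_def D_def)
  have NTe: "K*(M*T) = NT" by (simp add: NT_def D_def)
  have XB: "X = blkdiag K (M*R) (M*T) F"
  proof (rule eq_matI)
    fix i j assume "i < dim_row (blkdiag K (M*R) (M*T) F)" "j < dim_col (blkdiag K (M*R) (M*T) F)"
    hence i: "i < K*(M*R)" and j: "j < K*(M*T)" by (auto simp: blkdiag_def)
    have iN: "i < NR" and jN: "j < NT" using i j NRe NTe by auto
    have MR: "M*R > 0" "M*T > 0" using M R T by auto
    show "X $$ (i,j) = blkdiag K (M*R) (M*T) F $$ (i,j)"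
    proof (cases "i div (M*R) = j div (M*T)")
      case True
      have "i div (M*R) * (M*R) + i mod (M*R) = i" by (rule div_mult_mod_eq)
      moreover have "j div (M*T) * (M*T) + j mod (M*T) = j" by (rule div_mult_mod_eq)
      ultimately show ?thesis using True i j MR by (simp add: blkdiag_def F_def)
    next
      case False
      define a where "a = tau0 R K (i div M) * M + i mod M"
      define b where "b = (let y = tau0 T K (j div M) * M + j mod M in (y div (K*M)) * (K*M) + tau0 M K (y mod (K*M)))"
      have a: "a < NR" unfolding a_def by (rule P1.g[OF iN])
      have b: "b < NT" unfolding b_def Let_def by (rule P3.g[OF P2.g[OF jN]])
      have ra: "a div D < R" and tb: "b div D < T" using a b D by (auto simp: NR_def NT_def div_less_iff_less_mult)
      have "Y $$ (a,b) = (V * (H (a div D) (b div D) * A)) $$ (a mod D, b mod D)"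
        unfolding Y_def Ht_def KV_def D_def[symmetric] using a b
        by (intro kron_block_entry[OF Vc Ac Hc]) (auto simp: NR_def NT_def)
      also have "\<dots> = 0"
        unfolding V_def A_def D_def
      proof (rule core[OF K M g g1 l _ hyp])
        show "is_circulant (K*M) (H (a div (K*M)) (b div (K*M)))" using Hcirc ra tb by (simp add: D_def)
        show "a mod (K*M) < K*M" "b mod (K*M) < K*M" using K M by auto
        have "a mod (K*M) div M = i div (M*R)" unfolding a_def by (rule arith1[OF K M R i])
        moreover have "b mod (K*M) mod K = j div (M*T)" unfolding b_def using arith2[OF K M T j] by (simp add: Let_def)
        ultimately show "a mod (K*M) div M \<noteq> b mod (K*M) mod K" using False by simp
      qed
      finally have "X $$ (i,j) = 0" using Xentry[OF iN jN] by (simp add: a_def b_def)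
      then show ?thesis using False i j by (simp add: blkdiag_def)
    qed
  qed (use Xc NRe NTe in \<open>auto simp: blkdiag_def\<close>)
  have Fc: "\<forall>k<K. F k \<in> carrier_mat (M*R) (M*T)" by (simp add: F_def)
  have "herm U * blkdiag K (M*R) (M*T) F * P = Ht"
  proof -
    have "herm U * blkdiag K (M*R) (M*T) F * P = herm U * (U * Ht * transpose_mat P) * P"
      using XB by (simp add: X_def)
    also have "\<dots> = (herm U * U) * Ht * (transpose_mat P * P)"
      using hUc Uc Htc PTc Pc
      by (simp add: assoc_mult_mat[of _ NR NR _ NR _ NT] assoc_mult_mat[of _ NR NR _ NT _ NT]
          assoc_mult_mat[of _ NR NT _ NT _ NT])
    also have "\<dots> = Ht" using Htc by (simp add: UU PP)
    finally show ?thesis .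
  qed
  then show ?thesis using Fc
    by (intro exI[of _ F]) (simp add: U_def S1_def KV_def V_def P_def S2_def S3_def Ht_def A_def)
qed

end
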